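(* Let $\mathbf{X}=\{X^n\}_{n=1}^\infty$ (null hypothesis) and $\overline{\mathbf{X}}=\{\overline{X}^n\}_{n=1}^\infty$ (alternative hypothesis) be general sources with common alphabet $\mathcal{X}$, and let $\eta$ and $B_e(r\mid\mathbf{X}\|\overline{\mathbf{X}})$ be as defined in the context. Then for every $r\ge 0$, $$B_e(r\mid\mathbf{X}\|\overline{\mathbf{X}})=\inf_{R\in\mathbb{R}}\{R+\eta(R)\mid \eta(R)<r\},$$ where the infimum of the empty set is $+\infty$; in particular $B_e(0\mid\mathbf{X}\|\overline{\mathbf{X}})=+\infty$.
   Context: A general source $\mathbf{X}=\{X^n\}_{n=1}^\infty$ is a sequence of random variables $X^n$ taking values in $\mathcal{X}^n$, where $\mathcal{X}$ is an arbitrary abstract (measurable) set; no consistency between different $n$ is assumed. $P_Z$ denotes the distribution of a random variable $Z$. For $\mathbf{x}\in\mathcal{X}^n$, $\frac{P_{X^n}(\mathbf{x})}{P_{\overline{X}^n}(\mathbf{x})}$ denotes $g_n(\mathbf{x})$, the Radon–Nikodym derivative of $P_{X^n}$ with respect to $P_{\overline{X}^n}$, with the convention that $g_n=+\infty$ on a $P_{\overline{X}^n}$-null set carrying the singular part of $P_{X^n}$; $\frac{P_{X^n}(X^n)}{P_{\overline{X}^n}(X^n)}:=g_n(X^n)$. Logarithms are natural; $R+(+\infty)=+\infty$. Define $$\eta(R)=\liminf_{n\to\infty}\frac1n\log\frac{1}{\Pr\left\{\frac1n\log\frac{P_{X^n}(X^n)}{P_{\overline{X}^n}(X^n)}\le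 R\right\}}\in[0,+\infty].$$ For a measurable acceptance region $\mathcal{A}_n\subset\mathcal{X}^n$, let $\mu_n=\Pr\{X^n\notin\mathcal{A}_n\}$ (first kind error probability) and $\lambda_n=\Pr\{\overline{X}^n\in\mathcal{A}_n\}$ (second kind error probability). For $r\ge0$, a real $E$ is $r$-achievable if there exist acceptance regions $\mathcal{A}_n$ ($n=1,2,\dots$) with $\liminf_{n}\frac1n\log\frac1{\mu_n}\ge r$ and $\liminf_{n}\frac1n\log\frac1{\lambda_n}\ge E$. $B_e(r\mid\mathbf{X}\|\overline{\mathbf{X}})=\sup\{E\mid E\text{ is } r\text{-achievable}\}$. *)

theory Defs
  imports "HOL-Probability.Probability"
begin

text \<open>Generalized Radon-Nikodym derivative g of P with respect to Q:
  g is Q-measurable with values in [0,+inf]; there is a Q-null set N carrying the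
  singular part of P, on which g = +inf, and off N, g is the density of P w.r.t. Q.\<close>
definition gen_RN_deriv :: "'b measure \<Rightarrow> 'b measure \<Rightarrow> ('b \<Rightarrow> ennreal) \<Rightarrow> bool" where
  "gen_RN_deriv P Q g \<longleftrightarrow>
     g \<in> borel_measurable Q \<and>
     (\<exists>N\<in>sets Q. emeasure Q N = 0 \<and> (\<forall>x\<in>N. g x = \<infinity>) \<and>
        (\<forall>A\<in>sets Q. emeasure P A =
            (\<integral>\<^sup>+x. g x * indicator (A - N) x \<partial>Q) + emeasure P (A \<inter> N)))"

definition ln_enn :: "ennreal \<Rightarrow> ereal" where
  "ln_enn y = (if y = 0 then -\<infinity> else if y = \<infinity> then \<infinity> else ereal (ln (enn2real y)))"

definition neglog :: "real \<Rightarrow> ereal" where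
  "neglog p = (if p = 0 then \<infinity> else ereal (- ln p))"

definition exponent :: "(nat \<Rightarrow> real) \<Rightarrow> ereal" where
  "exponent p = liminf (\<lambda>n. ereal (1 / real n) * neglog (p n))"

text \<open>eta(R); P n = distribution of X^n, Q n = distribution of Xbar^n, g n = dP_n/dQ_n.\<close>
definition eta :: "(nat \<Rightarrow> 'b measure) \<Rightarrow> (nat \<Rightarrow> 'b \<Rightarrow> ennreal) \<Rightarrow> real \<Rightarrow> ereal" where
  "eta P g R = exponent (\<lambda>n. measure (P n)
      {x \<in> space (P n). ereal (1 / real n) * ln_enn (g n x) \<le> ereal R})"

definition r_achievable :: "(nat \<Rightarrow> 'b measure) \<Rightarrow> (nat \<Rightarrow> 'b measure) \<Rightarrow> real \<Rightarrow> real \<Rightarrow> bool" where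
  "r_achievable P Q r E \<longleftrightarrow>
     (\<exists>Acc::nat \<Rightarrow> 'b set. (\<forall>n. Acc n \<in> sets (Q n)) \<and>
        exponent (\<lambda>n. measure (P n) (space (P n) - Acc n)) \<ge> ereal r \<and>
        exponent (\<lambda>n. measure (Q n) (Acc n)) \<ge> ereal E)"

definition B_e :: "(nat \<Rightarrow> 'b measure) \<Rightarrow> (nat \<Rightarrow> 'b measure) \<Rightarrow> real \<Rightarrow> ereal" where
  "B_e P Q r = Sup {ereal E | E. r_achievable P Q r E}"

end

theory Submission
  imports Defs
begin

definition EB :: "(nat \<Rightarrow> real) \<Rightarrow> ereal \<Rightarrow> bool" where
  "EB p a \<longleftrightarrow> (\<forall>b. ereal b < a \<longrightarrow> eventually (\<lambda>n. p n \<le> exp (- real n * b)) sequentially)"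

lemma neglog_ge:
  assumes "n \<ge> 1" "0 \<le> p" "p \<le> exp (- real n * b)"
  shows "ereal b \<le> ereal (1 / real n) * neglog p"
proof (cases "p = 0")
  case True
  then show ?thesis using assms(1) by (simp add: neglog_def)
next
  case False
  then have pp: "p > 0" using assms(2) by simp
  have "ln p \<le> - real n * b" using assms(3) pp
    by (metis ln_exp ln_le_cancel_iff exp_gt_zero)
  then have "real n * b \<le> - ln p" by simp
  then have "b \<le> (1 / real n) * (- ln p)" using assms(1)
    by (simp add: field_simps)
  then show ?thesis using False by (simp add: neglog_def)
qed

lemma neglog_lt:
  assumes "n \<ge> 1" "ereal b < ereal (1 / real n) * neglog p" "0 \<le> p"
  shows "p \<le> exp (- real n * b)"
proof (cases "p = 0")
  case True
  then show ?thesis by simp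
next
  case False
  then have pp: "p > 0" using assms(3) by simp
  have "b < (1 / real n) * (- ln p)" using assms(2) False by (simp add: neglog_def)
  then have "real n * b < - ln p" using assms(1) by (simp add: field_simps)
  then have "ln p < - real n * b" by simp
  then have "p < exp (- real n * b)" using pp
    by (metis exp_less_cancel_iff exp_ln)
  then show ?thesis by simp
qed

lemma neglog_le:
  assumes "n \<ge> 1" "ereal (1 / real n) * neglog p \<le> y" "y < ereal b" "0 \<le> p"
  shows "exp (- real n * b) < p"
proof (cases "p = 0")
  case True
  then have "ereal (1 / real n) * neglog p = \<infinity>" using assms(1) by (simp add: neglog_def)
  then show ?thesis using assms(2,3) by simp
next
  case False
  then have pp: "p > 0" using assms(4) by simp
  have "ereal ((1 / real n) * (- ln p)) \<le> y" using assms(2) False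
    by (simp add: neglog_def)
  then have "ereal ((1 / real n) * (- ln p)) < ereal b" using assms(3) by (rule le_less_trans)
  then have "(1 / real n) * (- ln p) < b" by simp
  then have "- ln p < real n * b" using assms(1) by (simp add: field_simps)
  then have "- real n * b < ln p" by simp
  then show "exp (- real n * b) < p" using pp
    by (metis exp_less_cancel_iff exp_ln)
qed

lemma EB_imp_exponent:
  assumes "EB p a" "\<And>n. 0 \<le> p n"
  shows "a \<le> exponent p"
  unfolding exponent_def
proof (rule le_Liminf_iff[THEN iffD2], intro allI impI)
  fix y assume ya: "y < a"
  show "eventually (\<lambda>n. y < ereal (1/real n) * neglog (p n)) sequentially"
  proof (cases y)
    case (real c)
    obtain b where b: "y < ereal b" "ereal b < a" using ereal_dense2 ya by blast
    then have "eventually (\<lambda>n. p n \<le> exp (-real n * b)) sequentially" using assms EB_def by blast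
    moreover have "eventually (\<lambda>n. n \<ge> 1) sequentially" by (rule eventually_ge_at_top)
    ultimately show ?thesis
    proof eventually_elim
      case (elim n)
      then show ?case using neglog_ge[of n "p n" b] assms(2) b(1) by (meson less_le_trans)
    qed
  next
    case PInf with ya show ?thesis by simp
  next
    case MInf
    show ?thesis using MInf unfolding neglog_def by (auto intro!: always_eventually)
  qed
qed

lemma exponent_imp_EB:
  assumes "a \<le> exponent p" "\<And>n. 0 \<le> p n"
  shows "EB p a"
  unfolding EB_def
proof (intro allI impI)
  fix b assume "ereal b < a"
  then have "eventually (\<lambda>n. ereal b < ereal (1/real n) * neglog (p n)) sequentially"
    using le_Liminf_iff[THEN iffD1, OF assms(1)[unfolded exponent_def]] by blast
  moreover have "eventually (\<lambda>n. n \<ge> 1) sequentially" by (rule eventually_ge_at_top)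
  ultimately show "eventually (\<lambda>n. p n \<le> exp (- real n * b)) sequentially"
  proof eventually_elim
    case (elim n)
    then show ?case using neglog_lt[of n b "p n"] assms(2)[of n] by simp
  qed
qed

lemma exponent_less:
  assumes "exponent p < ereal b" "\<And>n. 0 \<le> p n"
  shows "frequently (\<lambda>n. exp (- real n * b) < p n) sequentially"
proof -
  have "\<not> ereal b \<le> exponent p" using assms by simp
  then obtain y where y: "y < ereal b" "\<not> eventually (\<lambda>n. y < ereal (1/real n) * neglog (p n)) sequentially"
    unfolding exponent_def le_Liminf_iff by auto
  then have fr: "frequently (\<lambda>n. ereal (1/real n) * neglog (p n) \<le> y) sequentially"
    by (simp add: not_eventually not_less)
  have "eventually (\<lambda>n. n \<ge> 1) sequentially" by (rule eventually_ge_at_top)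
  then have ev: "eventually (\<lambda>n. ereal (1/real n) * neglog (p n) \<le> y \<longrightarrow> exp (- real n * b) < p n) sequentially"
  proof eventually_elim
    case (elim n)
    show ?case
    proof
      assume "ereal (1/real n) * neglog (p n) \<le> y"
      then show "exp (- real n * b) < p n" using neglog_le[OF elim _ y(1) assms(2)] by simp
    qed
  qed
  show ?thesis by (rule frequently_mp[OF ev fr])
qed

lemma exp_const_ev:
  assumes "b < b'" "c \<ge> 0"
  shows "eventually (\<lambda>n. c * exp (- real n * b') \<le> exp (- real n * b)) sequentially"
proof -
  define d where "d = b' - b"
  have d: "d > 0" using assms d_def by simp
  obtain N :: nat where N: "c / d < real N" using reals_Archimedean2 by blast
  have "eventually (\<lambda>n. n \<ge> N) sequentially" by (rule eventually_ge_at_top)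
  then show ?thesis
  proof eventually_elim
    case (elim n)
    have "c / d \<le> real n" using N elim by linarith
    then have "c \<le> real n * d" using d by (simp add: field_simps)
    also have "\<dots> \<le> exp (real n * d)" using exp_ge_add_one_self[of "real n * d"] by linarith
    finally have "c * exp (- real n * b') \<le> exp (real n * d) * exp (- real n * b')"
      by (intro mult_right_mono) auto
    also have "\<dots> = exp (- real n * b)" unfolding d_def exp_add[symmetric]
      by (simp add: algebra_simps)
    finally show ?case .
  qed
qed

lemma EB_mono:
  assumes "EB q a" "eventually (\<lambda>n. p n \<le> q n) sequentially"
  shows "EB p a"
  unfolding EB_def
proof (intro allI impI)
  fix b assume "ereal b < a"
  then have "eventually (\<lambda>n. q n \<le> exp (- real n * b)) sequentially"
    using assms(1) unfolding EB_def by simp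
  with assms(2) show "eventually (\<lambda>n. p n \<le> exp (- real n * b)) sequentially"
    by eventually_elim linarith
qed

lemma EB_anti:
  assumes "EB p a" "a' \<le> a"
  shows "EB p a'"
  unfolding EB_def
proof (intro allI impI)
  fix b assume "ereal b < a'"
  then have "ereal b < a" using assms(2) by (rule less_le_trans)
  then show "eventually (\<lambda>n. p n \<le> exp (- real n * b)) sequentially"
    using assms(1) unfolding EB_def by simp
qed

lemma EB_add:
  assumes "EB p a" "EB q a"
  shows "EB (\<lambda>n. p n + q n) a"
  unfolding EB_def
proof (intro allI impI)
  fix b assume "ereal b < a"
  then obtain b' where b': "ereal b < ereal b'" "ereal b' < a" using ereal_dense2 by blast
  have "eventually (\<lambda>n. p n \<le> exp (- real n * b')) sequentially"
       "eventually (\<lambda>n. q n \<le> exp (- real n * b')) sequentially"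
    using assms b'(2) unfolding EB_def by blast+
  moreover have "eventually (\<lambda>n. 2 * exp (- real n * b') \<le> exp (- real n * b)) sequentially"
    using exp_const_ev[of b b' 2] b'(1) by simp
  ultimately show "eventually (\<lambda>n. p n + q n \<le> exp (- real n * b)) sequentially"
    by eventually_elim linarith
qed

lemma EB_zero: "EB (\<lambda>n. 0) a"
  unfolding EB_def by simp

lemma EB_sum:
  assumes "finite K" "\<And>k. k \<in> K \<Longrightarrow> EB (p k) a"
  shows "EB (\<lambda>n. \<Sum>k\<in>K. p k n) a"
  using assms
proof (induction K rule: finite_induct)
  case empty
  then show ?case using EB_zero by simp
next
  case (insert x F)
  then show ?case using EB_add[of "p x" a "\<lambda>n. \<Sum>k\<in>F. p k n"] by simp
qed

lemma EB_shift:
  assumes "EB p a"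
  shows "EB (\<lambda>n. exp (- real n * R) * p n) (ereal R + a)"
  unfolding EB_def
proof (intro allI impI)
  fix b assume b: "ereal b < ereal R + a"
  have "ereal (b - R) < a" using b by (cases a) auto
  then have "eventually (\<lambda>n. p n \<le> exp (- real n * (b - R))) sequentially"
    using assms unfolding EB_def by blast
  then show "eventually (\<lambda>n. exp (- real n * R) * p n \<le> exp (- real n * b)) sequentially"
  proof eventually_elim
    case (elim n)
    then have "exp (- real n * R) * p n \<le> exp (- real n * R) * exp (- real n * (b - R))"
      by (intro mult_left_mono) auto
    also have "\<dots> = exp (- real n * b)" unfolding exp_add[symmetric]
      by (simp add: algebra_simps)
    finally show ?case .
  qed
qed

lemma EB_one: "EB (\<lambda>n. 1) 0"
  unfolding EB_def
proof (intro allI impI)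
  fix b :: real assume "ereal b < 0"
  then have "b < 0" by simp
  then show "eventually (\<lambda>n. 1 \<le> exp (- real n * b)) sequentially"
    by (intro always_eventually allI) (simp add: mult_nonneg_nonpos)
qed


lemma ps_emeq: "prob_space M \<Longrightarrow> emeasure M A = ennreal (measure M A)"
  by (simp add: prob_space_def finite_measure.emeasure_eq_measure)

lemma RN_upper:
  assumes "prob_space P" "prob_space Q" "gen_RN_deriv P Q g"
    and "A \<in> sets Q" "\<And>x. x \<in> A \<Longrightarrow> g x \<le> ennreal c" "c \<ge> 0"
  shows "measure P A \<le> c * measure Q A"
proof -
  obtain N where N: "N \<in> sets Q" "emeasure Q N = 0" "\<forall>x\<in>N. g x = \<infinity>"
    and eq: "\<forall>A\<in>sets Q. emeasure P A = (\<integral>\<^sup>+x. g x * indicator (A - N) x \<partial>Q) + emeasure P (A \<inter> N)"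
    using assms(3) unfolding gen_RN_deriv_def by blast
  have "A \<inter> N = {}"
  proof (rule ccontr)
    assume "A \<inter> N \<noteq> {}"
    then obtain x where "x \<in> A" "x \<in> N" by blast
    then have "\<infinity> \<le> ennreal c" using N(3) assms(5) by metis
    then show False by (simp add: top_unique)
  qed
  then have "emeasure P A = (\<integral>\<^sup>+x. g x * indicator (A - N) x \<partial>Q)" using eq assms(4) by simp
  also have "\<dots> \<le> (\<integral>\<^sup>+x. ennreal c * indicator A x \<partial>Q)"
    by (intro nn_integral_mono) (auto simp: indicator_def assms(5))
  also have "\<dots> = ennreal c * emeasure Q A" using assms(4) by (simp add: nn_integral_cmult_indicator)
  finally have "ennreal (measure P A) \<le> ennreal (c * measure Q A)"
    using assms(1,2,6) by (simp add: ps_emeq ennreal_mult)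
  then show ?thesis using assms(6) by (simp add: ennreal_le_iff)
qed

lemma RN_lower:
  assumes "prob_space P" "prob_space Q" "gen_RN_deriv P Q g" "sets P = sets Q"
    and "A \<in> sets Q" "\<And>x. x \<in> A \<Longrightarrow> ennreal c < g x" "c \<ge> 0"
  shows "c * measure Q A \<le> measure P A"
proof -
  obtain N where N: "N \<in> sets Q" "emeasure Q N = 0" "\<forall>x\<in>N. g x = \<infinity>"
    and eq: "\<forall>A\<in>sets Q. emeasure P A = (\<integral>\<^sup>+x. g x * indicator (A - N) x \<partial>Q) + emeasure P (A \<inter> N)"
    using assms(3) unfolding gen_RN_deriv_def by blast
  have "ennreal c * emeasure Q A = ennreal c * emeasure Q (A - N)"
    using emeasure_Diff_null_set[of N Q A] N assms(5) by (simp add: null_sets_def)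
  also have "\<dots> = (\<integral>\<^sup>+x. ennreal c * indicator (A - N) x \<partial>Q)"
    using assms(5) N(1) by (simp add: nn_integral_cmult_indicator)
  also have "\<dots> \<le> (\<integral>\<^sup>+x. g x * indicator (A - N) x \<partial>Q)"
    by (intro nn_integral_mono) (auto simp: indicator_def assms(6) less_imp_le)
  also have "\<dots> \<le> emeasure P A" using eq assms(5) by simp
  finally have "ennreal (c * measure Q A) \<le> ennreal (measure P A)"
    using assms(1,2,7) by (simp add: ps_emeq ennreal_mult)
  then show ?thesis by (simp add: ennreal_le_iff)
qed

lemma Z_iff:
  assumes "n \<ge> 1"
  shows "(ereal (1 / real n) * ln_enn y \<le> ereal R) \<longleftrightarrow> y \<le> ennreal (exp (real n * R))"
proof (cases y rule: ennreal_cases)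
  case (real t)
  show ?thesis
  proof (cases "t = 0")
    case True
    then show ?thesis using real assms by (simp add: ln_enn_def)
  next
    case False
    then have tp: "t > 0" using real by simp
    have "(ereal (1 / real n) * ln_enn y \<le> ereal R) \<longleftrightarrow> ln t / real n \<le> R"
      using real tp by (simp add: ln_enn_def)
    also have "\<dots> \<longleftrightarrow> ln t \<le> real n * R" using assms by (simp add: field_simps)
    also have "\<dots> \<longleftrightarrow> t \<le> exp (real n * R)" using tp
      by (metis exp_le_cancel_iff exp_ln)
    also have "\<dots> \<longleftrightarrow> y \<le> ennreal (exp (real n * R))" using real by (simp add: ennreal_le_iff)
    finally show ?thesis .
  qed
next
  case top
  then show ?thesis using assms by (simp add: ln_enn_def top_unique)
qed


lemma ps_fin: "prob_space M \<Longrightarrow> finite_measure M"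
  by (simp add: prob_space_def)

lemma eta_nonneg:
  assumes "\<And>n. prob_space (P n)"
  shows "0 \<le> eta P g R"
  unfolding eta_def
proof (rule EB_imp_exponent)
  show "EB (\<lambda>n. measure (P n) {x \<in> space (P n). ereal (1 / real n) * ln_enn (g n x) \<le> ereal R}) 0"
    by (rule EB_mono[OF EB_one]) (intro always_eventually allI, simp add: prob_space.prob_le_1[OF assms])
qed simp

lemma main_lemma:
  fixes P Q :: "nat \<Rightarrow> 'b measure" and g :: "nat \<Rightarrow> 'b \<Rightarrow> ennreal" and r :: real
  assumes PP: "\<And>n. prob_space (P n)" and QQ: "\<And>n. prob_space (Q n)"
    and sets: "\<And>n. sets (P n) = sets (Q n)"
    and RN: "\<And>n. gen_RN_deriv (P n) (Q n) (g n)"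
    and r: "r \<ge> 0"
  shows "B_e P Q r = Inf {ereal R + eta P g R | R. eta P g R < ereal r}"
proof -
  define S where "S n R = {x \<in> space (P n). ereal (1 / real n) * ln_enn (g n x) \<le> ereal R}" for n R
  define F where "F R n = measure (P n) (S n R)" for R n
  define I where "I = Inf {ereal R + eta P g R | R. eta P g R < ereal r}"
  have eta_eq: "eta P g R = exponent (F R)" for R
    unfolding eta_def by (rule arg_cong[where f=exponent]) (simp add: fun_eq_iff F_def S_def)
  have speq: "space (P n) = space (Q n)" for n using sets sets_eq_imp_space_eq by metis
  have fP: "finite_measure (P n)" for n using PP ps_fin by blast
  have fQ: "finite_measure (Q n)" for n using QQ ps_fin by blast
  have S_iff: "x \<in> S n R \<longleftrightarrow> x \<in> space (P n) \<and> g n x \<le> ennreal (exp (real n * R))" if "n \<ge> 1" for n R x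
    using Z_iff[OF that] unfolding S_def by auto
  have SQ: "S n R \<in> sets (Q n)" for n R
  proof (cases "n = 0")
    case True
    then have "S n R = (if 0 \<le> R then space (Q n) else {})" unfolding S_def using speq by (auto simp: zero_ereal_def[symmetric])
    then show ?thesis by simp
  next
    case False
    then have eq: "S n R = {x \<in> space (Q n). g n x \<le> ennreal (exp (real n * R))}"
      using S_iff[where n=n and R=R] speq False by auto
    have gm[measurable]: "g n \<in> borel_measurable (Q n)" using RN unfolding gen_RN_deriv_def by blast
    have "{x \<in> space (Q n). g n x \<le> ennreal (exp (real n * R))} \<in> sets (Q n)" by measurable
    then show ?thesis using eq by simp
  qed
  have SP: "S n R \<in> sets (P n)" for n R using SQ sets by simp
  have Ssub: "S n R \<subseteq> space (P n)" for n R unfolding S_def by auto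
  have spQ: "space (P n) \<in> sets (Q n)" for n using speq by simp
  have F0: "0 \<le> F R n" for R n unfolding F_def by simp
  have eta0: "0 \<le> eta P g R" for R using eta_nonneg PP by blast
  have eta_fin: "\<exists>h. eta P g R = ereal h \<and> 0 \<le> h \<and> h < r" if "eta P g R < ereal r" for R
    using eta0[of R] that by (cases "eta P g R") auto

  have conv: "ereal E \<le> I" if ach: "r_achievable P Q r E" for E
  proof -
    obtain Acc where Acc: "\<forall>n. Acc n \<in> sets (Q n)"
      "ereal r \<le> exponent (\<lambda>n. measure (P n) (space (P n) - Acc n))"
      "ereal E \<le> exponent (\<lambda>n. measure (Q n) (Acc n))"
      using ach unfolding r_achievable_def by blast
    show ?thesis unfolding I_def
    proof (rule Inf_greatest)
      fix z assume "z \<in> {ereal R + eta P g R | R. eta P g R < ereal r}"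
      then obtain R where z: "z = ereal R + eta P g R" "eta P g R < ereal r" by blast
      obtain h where h: "eta P g R = ereal h" "0 \<le> h" "h < r" using eta_fin z(2) by blast
      show "ereal E \<le> z"
      proof (rule ccontr)
        assume "\<not> ereal E \<le> z"
        then have E: "R + h < E" using z h by simp
        obtain mm where m: "mm > 0" "mm \<le> r - h" "mm \<le> E - R - h"
          using E h by (intro that[of "min (r - h) (E - R - h)"]) auto
        define \<delta> where "\<delta> = mm / 4"
        have \<delta>1: "\<delta> > 0" using m(1) unfolding \<delta>_def by simp
        have \<delta>2: "h + 2*\<delta> < r" using m(1,2) unfolding \<delta>_def by simp
        have \<delta>3: "R + h + 3*\<delta> < E" using m(1,3) unfolding \<delta>_def by simp
        have exh: "exponent (F R) = ereal h" using trans[OF sym[OF eta_eq[of R]] h(1)] .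
        have exR: "exponent (F R) < ereal (h + \<delta>)" unfolding exh using \<delta>1 by simp
        have f1: "frequently (\<lambda>n. exp (- real n * (h + \<delta>)) < F R n) sequentially"
          by (rule exponent_less[OF exR F0])
        have "EB (\<lambda>n. measure (P n) (space (P n) - Acc n)) (ereal r)"
          by (rule exponent_imp_EB[OF Acc(2)]) simp
        then have e2: "eventually (\<lambda>n. measure (P n) (space (P n) - Acc n) \<le> exp (- real n * (h + 2*\<delta>))) sequentially"
          unfolding EB_def by (elim allE[of _ "h+2*\<delta>"]) (use \<delta>2 in simp)
        have "EB (\<lambda>n. measure (Q n) (Acc n)) (ereal E)"
          by (rule exponent_imp_EB[OF Acc(3)]) simp
        then have e3: "eventually (\<lambda>n. measure (Q n) (Acc n) \<le> exp (- real n * (R + h + 3*\<delta>))) sequentially"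
          unfolding EB_def by (elim allE[of _ "R + h + 3*\<delta>"]) (use \<delta>3 in simp)
        obtain N :: nat where N: "ln 2 / \<delta> < real N" using reals_Archimedean2 by blast
        have e4: "eventually (\<lambda>n. n \<ge> max 1 N) sequentially" by (rule eventually_ge_at_top)
        have "eventually (\<lambda>n. exp (- real n * (h + \<delta>)) < F R n \<longrightarrow>
            exp (- real n * (h + \<delta>)) < F R n \<and>
            measure (P n) (space (P n) - Acc n) \<le> exp (- real n * (h + 2*\<delta>)) \<and>
            measure (Q n) (Acc n) \<le> exp (- real n * (R + h + 3*\<delta>)) \<and> n \<ge> max 1 N) sequentially"
          using e2 e3 e4 by eventually_elim auto
        from frequently_mp[OF this f1] obtain n where n:
          "exp (- real n * (h + \<delta>)) < F R n"
          "measure (P n) (space (P n) - Acc n) \<le> exp (- real n * (h + 2*\<delta>))"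
          "measure (Q n) (Acc n) \<le> exp (- real n * (R + h + 3*\<delta>))" "n \<ge> max 1 N"
          by (auto dest: frequently_ex)
        define a where "a = exp (- real n * h)"
        define u where "u = exp (- real n * \<delta>)"
        have n1: "n \<ge> 1" using n(4) by simp
        have "ln 2 / \<delta> < real n" using N n(4) by (meson le_max_iff_disj less_le_trans of_nat_le_iff order_refl)
        then have "ln 2 < real n * \<delta>" using \<delta>1 by (simp add: field_simps)
        then have "u < exp (- ln 2)" unfolding u_def by simp
        then have u: "u < 1/2" by (simp add: exp_minus)
        have u0: "u > 0" "a > 0" unfolding u_def a_def by auto
        have eq1: "exp (- real n * (h + \<delta>)) = a * u"
          unfolding a_def u_def exp_add[symmetric] by (simp add: algebra_simps)
        have eq2: "exp (- real n * (h + 2*\<delta>)) = a * u * u"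
          unfolding a_def u_def exp_add[symmetric] by (simp add: algebra_simps)
        have eq3: "exp (real n * R) * exp (- real n * (R + h + 3*\<delta>)) = a * u * u * u"
          unfolding a_def u_def exp_add[symmetric] by (simp add: algebra_simps)
        have AccP: "Acc n \<in> sets (P n)" using Acc(1) sets by blast
        have "F R n \<le> measure (P n) ((S n R \<inter> Acc n) \<union> (space (P n) - Acc n))"
          unfolding F_def using SP AccP Ssub[of n R] by (intro finite_measure.finite_measure_mono[OF fP]) (auto intro: sets.Un sets.Int sets.Diff)
        also have "\<dots> \<le> measure (P n) (S n R \<inter> Acc n) + measure (P n) (space (P n) - Acc n)"
          using SP AccP by (intro measure_Un_le) auto
        finally have sub: "F R n \<le> measure (P n) (S n R \<inter> Acc n) + measure (P n) (space (P n) - Acc n)" .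
        have up: "measure (P n) (S n R \<inter> Acc n) \<le> exp (real n * R) * measure (Q n) (S n R \<inter> Acc n)"
          by (rule RN_upper[OF PP QQ RN]) (use SQ Acc(1) S_iff n1 in \<open>auto intro: sets.Int\<close>)
        have mo: "measure (Q n) (S n R \<inter> Acc n) \<le> measure (Q n) (Acc n)"
          using Acc(1) by (intro finite_measure.finite_measure_mono[OF fQ]) auto
        have "exp (real n * R) * measure (Q n) (Acc n) \<le> exp (real n * R) * exp (- real n * (R + h + 3*\<delta>))"
          using n(3) by simp
        moreover have "exp (real n * R) * measure (Q n) (S n R \<inter> Acc n) \<le> exp (real n * R) * measure (Q n) (Acc n)"
          using mo by simp
        ultimately have "a * u < a * u * u * u + a * u * u"
          using n(1,2) sub up eq1 eq2 eq3 by linarith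
        then have "a * u < a * (u * u * u + u * u)" by (simp add: algebra_simps)
        then have uu: "u < u * u * u + u * u" using u0 by simp
        have "u * u < u * (1/2)" using u u0 by (intro mult_strict_left_mono) auto
        moreover have "u * u * u < u * u * (1/2)" using u u0 by (intro mult_strict_left_mono) auto
        ultimately show False using uu u0 by linarith
      qed
    qed
  qed

  have ach: "r_achievable P Q r E" if EI: "ereal E < I" for E
  proof -
    define R0 where "R0 = E - r"
    have R0: "\<not> eta P g R0 < ereal r"
    proof
      assume a: "eta P g R0 < ereal r"
      obtain h where h: "eta P g R0 = ereal h" "0 \<le> h" "h < r" using eta_fin a by blast
      have "I \<le> ereal R0 + eta P g R0" unfolding I_def using a by (intro Inf_lower) blast
      also have "\<dots> < ereal E" using h R0_def by simp
      finally show False using EI by simp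
    qed
    obtain \<delta> where \<delta>: "\<delta> > 0" "ereal (E + \<delta>) \<le> I"
    proof (cases I)
      case (real i) then show ?thesis using that[of "i - E"] EI by auto
    next
      case PInf then show ?thesis using that[of 1] by auto
    next
      case MInf then show ?thesis using EI by auto
    qed
    define K where "K = nat \<lceil>r / \<delta>\<rceil>"
    define Rk where "Rk k = R0 + real k * \<delta>" for k
    define Acc where "Acc n = space (P n) - S n R0" for n
    have Acc_sets: "Acc n \<in> sets (Q n)" for n unfolding Acc_def by (rule sets.Diff[OF spQ SQ])
    have mu: "(\<lambda>n. measure (P n) (space (P n) - Acc n)) = F R0"
      unfolding Acc_def F_def S_def by (auto simp: fun_eq_iff Diff_Diff_Int Int_absorb1)
    have mu_exp: "ereal r \<le> exponent (\<lambda>n. measure (P n) (space (P n) - Acc n))"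
      unfolding mu eta_eq[symmetric] using R0 by simp
    have split: "measure (Q n) (space (P n) - S n R0) \<le> (\<Sum>k<m. measure (Q n) (S n (Rk (Suc k)) - S n (Rk k))) + measure (Q n) (space (P n) - S n (Rk m))" for n m
    proof (induction m)
      case 0
      then show ?case by (simp add: Rk_def)
    next
      case (Suc m)
      have "measure (Q n) (space (P n) - S n (Rk m)) \<le> measure (Q n) ((S n (Rk (Suc m)) - S n (Rk m)) \<union> (space (P n) - S n (Rk (Suc m))))"
        using SQ spQ by (intro finite_measure.finite_measure_mono[OF fQ]) (auto intro: sets.Diff sets.Un)
      also have "\<dots> \<le> measure (Q n) (S n (Rk (Suc m)) - S n (Rk m)) + measure (Q n) (space (P n) - S n (Rk (Suc m)))"
        using SQ spQ by (intro measure_Un_le) (auto intro: sets.Diff)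
      finally show ?case using Suc by simp
    qed
    have slice: "measure (Q n) (S n b - S n c) \<le> exp (- real n * c) * F b n" if n1: "n \<ge> 1" for n b c
    proof -
      have "exp (real n * c) * measure (Q n) (S n b - S n c) \<le> measure (P n) (S n b - S n c)"
        by (rule RN_lower[OF PP QQ RN sets]) (use SQ S_iff n1 in \<open>auto simp: not_le intro: sets.Diff\<close>)
      also have "\<dots> \<le> F b n" unfolding F_def
        using SP by (intro finite_measure.finite_measure_mono[OF fP]) auto
      finally have "exp (real n * c) * measure (Q n) (S n b - S n c) \<le> F b n" .
      then have "exp (- real n * c) * (exp (real n * c) * measure (Q n) (S n b - S n c)) \<le> exp (- real n * c) * F b n"
        by (intro mult_left_mono) auto
      then show ?thesis by (simp add: exp_minus field_simps)
    qed
    have tail: "measure (Q n) (space (P n) - S n c) \<le> exp (- real n * c) * 1" if n1: "n \<ge> 1" for n c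
    proof -
      have "exp (real n * c) * measure (Q n) (space (P n) - S n c) \<le> measure (P n) (space (P n) - S n c)"
        by (rule RN_lower[OF PP QQ RN sets]) (use SQ spQ S_iff n1 in \<open>auto simp: not_le intro: sets.Diff\<close>)
      also have "\<dots> \<le> 1" using PP prob_space.prob_le_1 by blast
      finally have "exp (real n * c) * measure (Q n) (space (P n) - S n c) \<le> 1" .
      then have "exp (- real n * c) * (exp (real n * c) * measure (Q n) (space (P n) - S n c)) \<le> exp (- real n * c) * 1"
        by (intro mult_left_mono) auto
      then show ?thesis by (simp add: exp_minus field_simps)
    qed
    have bound: "eventually (\<lambda>n. measure (Q n) (Acc n) \<le> (\<Sum>k<K. exp (- real n * Rk k) * F (Rk (Suc k)) n) + exp (- real n * Rk K) * 1) sequentially"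
      using eventually_ge_at_top[of 1]
    proof eventually_elim
      case (elim n)
      have "measure (Q n) (Acc n) \<le> (\<Sum>k<K. measure (Q n) (S n (Rk (Suc k)) - S n (Rk k))) + measure (Q n) (space (P n) - S n (Rk K))"
        using split[of n K] unfolding Acc_def .
      also have "\<dots> \<le> (\<Sum>k<K. exp (- real n * Rk k) * F (Rk (Suc k)) n) + exp (- real n * Rk K) * 1"
        using slice[OF elim] tail[OF elim] by (intro add_mono sum_mono) auto
      finally show ?case .
    qed
    have EBk: "EB (\<lambda>n. exp (- real n * Rk k) * F (Rk (Suc k)) n) (ereal E)" for k
    proof (rule EB_anti[OF EB_shift[OF exponent_imp_EB[OF order_refl F0]]])
      show "ereal E \<le> ereal (Rk k) + exponent (F (Rk (Suc k)))"
      proof (cases "eta P g (Rk (Suc k)) < ereal r")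
        case True
        obtain h where h: "eta P g (Rk (Suc k)) = ereal h" using eta_fin True by blast
        have exh2: "exponent (F (Rk (Suc k))) = ereal h" using trans[OF sym[OF eta_eq] h] .
        have "I \<le> ereal (Rk (Suc k)) + eta P g (Rk (Suc k))" unfolding I_def using True by (intro Inf_lower) blast
        then have "I \<le> ereal (Rk (Suc k) + h)" unfolding h by simp
        then have "ereal (E + \<delta>) \<le> ereal (Rk (Suc k) + h)" using \<delta>(2) by (rule order_trans[rotated])
        then have "E + \<delta> \<le> Rk (Suc k) + h" by (rule ereal_less_eq(3)[THEN iffD1])
        then have "E \<le> Rk k + h" unfolding Rk_def by (simp add: algebra_simps)
        then show ?thesis unfolding exh2 by simp
      next
        case False
        then have a0: "ereal r \<le> exponent (F (Rk (Suc k)))" unfolding eta_eq by simp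
        have "E \<le> Rk k + r" unfolding Rk_def R0_def using \<delta>(1) by simp
        then have a1: "ereal E \<le> ereal (Rk k) + ereal r" by simp
        have a2: "ereal (Rk k) + ereal r \<le> ereal (Rk k) + exponent (F (Rk (Suc k)))"
          using a0 by (rule add_left_mono)
        show ?thesis using a1 a2 by (rule order_trans)
      qed
    qed
    have EBt: "EB (\<lambda>n. exp (- real n * Rk K) * 1) (ereal E)"
    proof (rule EB_anti[OF EB_shift[OF EB_one]])
      have "r / \<delta> \<le> real K" unfolding K_def by linarith
      then have "r \<le> real K * \<delta>" using \<delta>(1) by (simp add: field_simps)
      then show "ereal E \<le> ereal (Rk K) + 0" unfolding Rk_def R0_def by simp
    qed
    have "EB (\<lambda>n. (\<Sum>k<K. exp (- real n * Rk k) * F (Rk (Suc k)) n) + exp (- real n * Rk K) * 1) (ereal E)"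
      by (rule EB_add[OF EB_sum EBt]) (use EBk in auto)
    then have "EB (\<lambda>n. measure (Q n) (Acc n)) (ereal E)" using bound by (rule EB_mono)
    then have "ereal E \<le> exponent (\<lambda>n. measure (Q n) (Acc n))" by (rule EB_imp_exponent) simp
    then show ?thesis unfolding r_achievable_def using Acc_sets mu_exp by blast
  qed

  show ?thesis unfolding B_e_def I_def[symmetric]
  proof (rule antisym)
    show "Sup {ereal E | E. r_achievable P Q r E} \<le> I" by (rule Sup_least) (use conv in blast)
    show "I \<le> Sup {ereal E | E. r_achievable P Q r E}"
      unfolding le_Sup_iff
    proof (intro allI impI)
      fix y assume "y < I"
      then obtain z where z: "y < ereal z" "ereal z < I" using ereal_dense2 by blast
      then show "\<exists>a\<in>{ereal E | E. r_achievable P Q r E}. y < a" using ach by blast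
    qed
  qed
qed


theorem theorem2p1:
  fixes A :: "'a measure"
    and P Q :: "nat \<Rightarrow> (nat \<Rightarrow> 'a) measure"
    and g :: "nat \<Rightarrow> (nat \<Rightarrow> 'a) \<Rightarrow> ennreal"
    and r :: real
  assumes "\<And>n. prob_space (P n)" and "\<And>n. prob_space (Q n)"
    and "\<And>n. sets (P n) = sets (PiM {..<n} (\<lambda>_. A))"
    and "\<And>n. sets (Q n) = sets (PiM {..<n} (\<lambda>_. A))"
    and "\<And>n. gen_RN_deriv (P n) (Q n) (g n)"
    and "r \<ge> 0"
  shows "B_e P Q r = Inf {ereal R + eta P g R | R. eta P g R < ereal r} \<and> B_e P Q 0 = \<infinity>"
proof
  have sets: "\<And>n. sets (P n) = sets (Q n)" using assms(3,4) by simp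
  show "B_e P Q r = Inf {ereal R + eta P g R | R. eta P g R < ereal r}"
    by (rule main_lemma[OF assms(1,2) sets assms(5,6)])
  have "B_e P Q 0 = Inf {ereal R + eta P g R | R. eta P g R < ereal 0}"
    by (rule main_lemma[OF assms(1,2) sets assms(5)]) simp
  also have "{ereal R + eta P g R | R. eta P g R < ereal 0} = {}"
    using eta_nonneg[OF assms(1)] by (auto simp: zero_ereal_def[symmetric] not_less)
  finally show "B_e P Q 0 = \<infinity>" by (simp add: top_ereal_def)
qed

end
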